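(* Let $\mathcal{M}$ be a nontrivial graph matroid family with dimensionality $d$ and threshold $t$. Let $G=G_1\cup G_2$, where $G_1$ and $G_2$ are graphs with at least $t$ vertices in common. If $G_1$ and $G_2$ are both $\mathcal{M}$-rigid, then so is $G$.
   Context: All graphs are finite and simple and have no isolated vertices. A graph matroid family $\mathcal{M}$ assigns to every graph $G$ a matroid $\mathcal{M}(G)$ on $E(G)$ such that (i) every graph isomorphism $V(G)\to V(H)$ induces an isomorphism $\mathcal{M}(G)\to\mathcal{M}(H)$, and (ii) for every subgraph $H$ of $G$, $\mathcal{M}(H)$ is the restriction of $\mathcal{M}(G)$ to $E(H)$. $r(G)$ is the rank of $\mathcal{M}(G)$; $G$ is $\mathcal{M}$-rigid if $r(G)=r(K_{V(G)})$. $\mathcal{M}$ is nontrivial if some graph $G$ has $r(G)<|E(G)|$. An $\mathcal{M}$-circuit is a graph $C$ with $r(C)<|E(C)|$ and $r(C-e)=|E(C)|-1$ for all edges $e$. Dimensionality $d$: minimum over $\mathcal{M}$-circuits of (minimum degree $-1$); threshold $t$: minimum of $|V(C)|-1$ over $\mathcal{M}$-circuits $C$ of minimum degree $d+1$. $G_1\cup G_2$ is the graph with vertex set $V(G_1)\cup V(G_2)$ and edge set $E(G_1)\cup E(G_2)$. *)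

theory Defs
  imports Main
begin

text \<open>Since graphs have no isolated vertices, the
vertex set is the union of the edges, and subgraphs are exactly edge subsets.\<close>

type_synonym 'v graph = "'v set set"

definition graph :: "'v graph \<Rightarrow> bool" where
  "graph G \<longleftrightarrow> finite G \<and> (\<forall>e\<in>G. card e = 2)"

definition verts :: "'v graph \<Rightarrow> 'v set" where
  "verts G = \<Union>G"

definition complete_graph :: "'v set \<Rightarrow> 'v graph" where
  "complete_graph V = {e. \<exists>u v. u \<in> V \<and> v \<in> V \<and> u \<noteq> v \<and> e = {u, v}}"

definition degree :: "'v graph \<Rightarrow> 'v \<Rightarrow> nat" where
  "degree G v = card {e \<in> G. v \<in> e}"

definition min_degree :: "'v graph \<Rightarrow> nat" where
  "min_degree G = Min (degree G ` verts G)"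

definition matroid :: "'e set \<Rightarrow> ('e set \<Rightarrow> bool) \<Rightarrow> bool" where
  "matroid E indep \<longleftrightarrow> finite E \<and> indep {} \<and>
     (\<forall>X. indep X \<longrightarrow> X \<subseteq> E) \<and>
     (\<forall>X Y. indep Y \<and> X \<subseteq> Y \<longrightarrow> indep X) \<and>
     (\<forall>X Y. indep X \<and> indep Y \<and> card X < card Y \<longrightarrow> (\<exists>e\<in>Y - X. indep (insert e X)))"

definition graph_matroid_family :: "('v graph \<Rightarrow> 'v set set \<Rightarrow> bool) \<Rightarrow> bool" where
  "graph_matroid_family M \<longleftrightarrow>
     (\<forall>G. graph G \<longrightarrow> matroid G (M G)) \<and>
     (\<forall>G H f. graph G \<and> graph H \<and> bij_betw f (verts G) (verts H) \<and>
        (\<forall>u\<in>verts G. \<forall>v\<in>verts G. {u, v} \<in> G \<longleftrightarrow> {f u, f v} \<in> H) \<longrightarrow>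
        (\<forall>X. X \<subseteq> G \<longrightarrow> (M G X \<longleftrightarrow> M H ((\<lambda>e. f ` e) ` X)))) \<and>
     (\<forall>G H. graph G \<and> graph H \<and> H \<subseteq> G \<longrightarrow> (\<forall>X. M H X \<longleftrightarrow> X \<subseteq> H \<and> M G X))"

definition rank :: "('v graph \<Rightarrow> 'v set set \<Rightarrow> bool) \<Rightarrow> 'v graph \<Rightarrow> nat" where
  "rank M G = Max {card X | X. X \<subseteq> G \<and> M G X}"

definition rigid :: "('v graph \<Rightarrow> 'v set set \<Rightarrow> bool) \<Rightarrow> 'v graph \<Rightarrow> bool" where
  "rigid M G \<longleftrightarrow> rank M G = rank M (complete_graph (verts G))"

definition nontrivial :: "('v graph \<Rightarrow> 'v set set \<Rightarrow> bool) \<Rightarrow> bool" where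
  "nontrivial M \<longleftrightarrow> (\<exists>G. graph G \<and> rank M G < card G)"

definition circuit :: "('v graph \<Rightarrow> 'v set set \<Rightarrow> bool) \<Rightarrow> 'v graph \<Rightarrow> bool" where
  "circuit M C \<longleftrightarrow> graph C \<and> rank M C < card C \<and>
     (\<forall>e\<in>C. rank M (C - {e}) = card C - 1)"

definition dimensionality :: "('v graph \<Rightarrow> 'v set set \<Rightarrow> bool) \<Rightarrow> nat" where
  "dimensionality M = Inf {min_degree C - 1 | C. circuit M C}"

definition threshold :: "('v graph \<Rightarrow> 'v set set \<Rightarrow> bool) \<Rightarrow> nat" where
  "threshold M = Inf {card (verts C) - 1 | C. circuit M C \<and> min_degree C = dimensionality M + 1}"

end

theory Submission
  imports Defs
begin


definition rk :: "('e set \<Rightarrow> bool) \<Rightarrow> 'e set \<Rightarrow> nat" where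
  "rk I S = Max {card X | X. X \<subseteq> S \<and> I X}"

context
  fixes E :: "'e set" and I :: "'e set \<Rightarrow> bool"
  assumes m: "matroid E I"
begin

lemma m_fin: "finite E" and m_empty: "I {}" and m_sub: "I X \<Longrightarrow> X \<subseteq> E"
  and m_down: "I Y \<Longrightarrow> X \<subseteq> Y \<Longrightarrow> I X"
  and m_aug: "I X \<Longrightarrow> I Y \<Longrightarrow> card X < card Y \<Longrightarrow> \<exists>e\<in>Y - X. I (insert e X)"
  using m unfolding matroid_def by blast+

lemma m_finX: "I X \<Longrightarrow> finite X"
  by (rule finite_subset[OF m_sub m_fin])

lemma rk_set_fin: "finite {card X | X. X \<subseteq> S \<and> I X}"
proof -
  have "{card X | X. X \<subseteq> S \<and> I X} \<subseteq> {..card E}"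
    using m_sub m_fin card_mono by fastforce
  then show ?thesis using finite_subset by blast
qed

lemma rk_ge: "I X \<Longrightarrow> X \<subseteq> S \<Longrightarrow> card X \<le> rk I S"
  unfolding rk_def using rk_set_fin by (intro Max_ge) auto

lemma rk_ex: "\<exists>X. X \<subseteq> S \<and> I X \<and> card X = rk I S"
proof -
  have "rk I S \<in> {card X | X. X \<subseteq> S \<and> I X}"
    unfolding rk_def using rk_set_fin m_empty by (intro Max_in) auto
  then show ?thesis by auto
qed

lemma rk_mono: "S \<subseteq> T \<Longrightarrow> rk I S \<le> rk I T"
  using rk_ex[of S] rk_ge by (metis order_trans)

lemma rk_le_card: "finite S \<Longrightarrow> rk I S \<le> card S"
  using rk_ex[of S] card_mono by metis

lemma rk_extend:
  assumes "I Z" "Z \<subseteq> S"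
  shows "\<exists>X. Z \<subseteq> X \<and> X \<subseteq> S \<and> I X \<and> card X = rk I S"
proof -
  define P where "P = (\<lambda>X. Z \<subseteq> X \<and> X \<subseteq> S \<and> I X)"
  have b: "\<forall>y. P y \<longrightarrow> card y < Suc (card E)"
  proof (intro allI impI)
    fix y assume "P y"
    then have "y \<subseteq> E" using m_sub unfolding P_def by blast
    then show "card y < Suc (card E)" using m_fin card_mono by (simp add: less_Suc_eq_le)
  qed
  have pz: "P Z" using assms unfolding P_def by blast
  have "\<exists>x. P x \<and> (\<forall>y. P y \<longrightarrow> card y \<le> card x)"
    by (rule Lattices_Big.ex_has_greatest_nat[OF pz b])
  then obtain X where X: "P X" and Xm0: "\<forall>y. P y \<longrightarrow> card y \<le> card X"
    by (elim exE conjE)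
  have Xm: "\<And>y. P y \<Longrightarrow> card y \<le> card X" using Xm0 by simp
  have X1: "Z \<subseteq> X" "X \<subseteq> S" "I X" using X unfolding P_def by simp_all
  have fX: "finite X" by (rule finite_subset[OF m_sub[OF X1(3)] m_fin])
  have le: "card X \<le> rk I S" by (rule rk_ge[OF X1(3) X1(2)])
  show ?thesis
  proof (rule ccontr)
    assume "\<not> ?thesis"
    then have "card X \<noteq> rk I S" using X1 by blast
    then have lt: "card X < rk I S" using le by linarith
    obtain Y where Y: "Y \<subseteq> S" "I Y" "card Y = rk I S" using rk_ex[of S] by auto
    have "card X < card Y" using lt Y by simp
    then obtain e where e: "e \<in> Y - X" "I (insert e X)" using m_aug[OF X1(3) Y(2)] by blast
    have "P (insert e X)" using X1 e Y unfolding P_def by auto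
    then have "card (insert e X) \<le> card X" by (rule Xm)
    moreover have "card (insert e X) = Suc (card X)"
      using e fX by simp
    ultimately show False by simp
  qed
qed

lemma rk_CL:
  assumes Z: "I Z" "Z \<subseteq> S" and nf: "\<not> I (insert f Z)"
  shows "rk I (insert f S) = rk I S"
proof -
  obtain X where X: "Z \<subseteq> X" "X \<subseteq> S" "I X" "card X = rk I S"
    using rk_extend[OF Z] by (elim exE conjE)
  have fX: "finite X" by (rule m_finX[OF X(3)])
  have ge: "rk I S \<le> rk I (insert f S)" by (rule rk_mono) (rule subset_insertI)
  show ?thesis
  proof (rule ccontr)
    assume "rk I (insert f S) \<noteq> rk I S"
    then have lt: "card X < rk I (insert f S)" using ge X(4) by linarith
    obtain Y where Y: "Y \<subseteq> insert f S" "I Y" "card Y = rk I (insert f S)"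
      using rk_ex[of "insert f S"] by auto
    have "card X < card Y" using lt Y(3) by simp
    then obtain g where g: "g \<in> Y - X" "I (insert g X)" using m_aug[OF X(3) Y(2)] by auto
    show False
    proof (cases "g = f")
      case True
      have "insert f Z \<subseteq> insert g X" using True X(1) by auto
      then have "I (insert f Z)" by (rule m_down[OF g(2)])
      then show False using nf by contradiction
    next
      case False
      have gS: "g \<in> S" using g(1) Y(1) False by auto
      then have "insert g X \<subseteq> S" using X(2) by simp
      then have "card (insert g X) \<le> rk I S" by (rule rk_ge[OF g(2)])
      moreover have "card (insert g X) = Suc (card X)" using g(1) fX by simp
      ultimately show False using X(4) by simp
    qed
  qed
qed

lemma rk_transfer:
  assumes "rk I (insert f S) = rk I S" "f \<notin> S" "X \<subseteq> S" "I X" "card X = rk I S"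
  shows "\<not> I (insert f X)"
proof
  assume a: "I (insert f X)"
  have fX: "finite X" by (rule m_finX[OF assms(4)])
  have "insert f X \<subseteq> insert f S" using assms(3) by auto
  then have "card (insert f X) \<le> rk I (insert f S)" by (rule rk_ge[OF a])
  moreover have "card (insert f X) = Suc (card X)" using assms(2,3) fX by (subst card_insert_disjoint) auto
  ultimately show False using assms by simp
qed

lemma rk_mono_cl:
  assumes "S \<subseteq> T" "rk I (insert f S) = rk I S"
  shows "rk I (insert f T) = rk I T"
proof (cases "f \<in> S")
  case True
  then show ?thesis using assms by (simp add: insert_absorb subsetD)
next
  case False
  obtain X where X: "X \<subseteq> S" "I X" "card X = rk I S" using rk_ex[of S] by auto
  have "\<not> I (insert f X)" using rk_transfer[OF assms(2) False X] .
  moreover have "X \<subseteq> T" using X(1) assms(1) by auto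
  ultimately show ?thesis using rk_CL[OF X(2)] by auto
qed

lemma rk_union:
  assumes "\<forall>f\<in>B. rk I (insert f T) = rk I T"
  shows "rk I (T \<union> B) = rk I T"
proof -
  obtain X where X: "X \<subseteq> T" "I X" "card X = rk I T" using rk_ex[of T] by auto
  have fX: "finite X" by (rule m_finX[OF X(2)])
  have ge: "rk I T \<le> rk I (T \<union> B)" by (rule rk_mono) auto
  show ?thesis
  proof (rule ccontr)
    assume "\<not> ?thesis"
    then have lt: "card X < rk I (T \<union> B)" using ge X(3) by linarith
    obtain Y where Y: "Y \<subseteq> T \<union> B" "I Y" "card Y = rk I (T \<union> B)" using rk_ex[of "T \<union> B"] by auto
    have "card X < card Y" using lt Y(3) by simp
    then obtain g where g: "g \<in> Y - X" "I (insert g X)" using m_aug[OF X(2) Y(2)] by auto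
    have gi: "rk I (insert g T) = rk I T"
      using g Y assms by (cases "g \<in> T") (auto simp: insert_absorb)
    have "insert g X \<subseteq> insert g T" using X(1) by auto
    then have "card (insert g X) \<le> rk I (insert g T)" by (rule rk_ge[OF g(2)])
    moreover have "card (insert g X) = Suc (card X)" using g(1) fX by simp
    ultimately show False using X(3) gi by simp
  qed
qed

end


lemma graph_sub: "graph G \<Longrightarrow> H \<subseteq> G \<Longrightarrow> graph H"
  unfolding graph_def using finite_subset by blast

lemma graph_Un: "graph G \<Longrightarrow> graph H \<Longrightarrow> graph (G \<union> H)"
  unfolding graph_def by auto

lemma verts_Un: "verts (A \<union> B) = verts A \<union> verts B"
  by (simp add: verts_def)

lemma finite_verts: "graph G \<Longrightarrow> finite (verts G)"
  unfolding graph_def verts_def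
  by (intro finite_Union) (auto intro: card_ge_0_finite)

lemma complete_graph_graph: "finite V \<Longrightarrow> graph (complete_graph V)"
proof -
  assume f: "finite V"
  have "complete_graph V \<subseteq> (\<lambda>(u,v). {u,v}) ` (V \<times> V)"
    unfolding complete_graph_def by auto
  then have "finite (complete_graph V)" using f finite_subset by blast
  then show ?thesis unfolding graph_def complete_graph_def by auto
qed

lemma complete_graph_mono: "V \<subseteq> W \<Longrightarrow> complete_graph V \<subseteq> complete_graph W"
  unfolding complete_graph_def by blast

lemma graph_sub_complete: "graph G \<Longrightarrow> G \<subseteq> complete_graph (verts G)"
proof
  fix e assume g: "graph G" and e: "e \<in> G"
  then have "card e = 2" unfolding graph_def by auto
  then obtain u v where "e = {u,v}" "u \<noteq> v" by (meson card_2_iff)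
  then show "e \<in> complete_graph (verts G)" using e unfolding complete_graph_def verts_def by blast
qed

lemma in_complete: "u \<in> V \<Longrightarrow> v \<in> V \<Longrightarrow> u \<noteq> v \<Longrightarrow> {u,v} \<in> complete_graph V"
  unfolding complete_graph_def by blast

lemma gm_mat: "graph_matroid_family M \<Longrightarrow> graph G \<Longrightarrow> matroid G (M G)"
  unfolding graph_matroid_family_def by (drule conjunct1) simp

lemma gm_res: "graph_matroid_family M \<Longrightarrow> graph K \<Longrightarrow> graph H \<Longrightarrow> H \<subseteq> K \<Longrightarrow> M H X \<longleftrightarrow> X \<subseteq> H \<and> M K X"
  unfolding graph_matroid_family_def by simp

lemma gm_iso: "graph_matroid_family M \<Longrightarrow> graph G \<Longrightarrow> graph H \<Longrightarrow> bij_betw f (verts G) (verts H) \<Longrightarrow>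
        (\<forall>u\<in>verts G. \<forall>v\<in>verts G. {u, v} \<in> G \<longleftrightarrow> {f u, f v} \<in> H) \<Longrightarrow> X \<subseteq> G \<Longrightarrow>
        (M G X \<longleftrightarrow> M H ((\<lambda>e. f ` e) ` X))"
  unfolding graph_matroid_family_def by simp

lemma rank_rk: "rank M G = rk (M G) G"
  unfolding rank_def rk_def by simp

lemma rank_res: "graph_matroid_family M \<Longrightarrow> graph K \<Longrightarrow> graph H \<Longrightarrow> H \<subseteq> K \<Longrightarrow> rank M H = rk (M K) H"
proof -
  assume a: "graph_matroid_family M" "graph K" "graph H" "H \<subseteq> K"
  have "{card X | X. X \<subseteq> H \<and> M H X} = {card X | X. X \<subseteq> H \<and> M K X}"
    using gm_res[OF a] by blast
  then show ?thesis unfolding rank_def rk_def by simp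
qed

lemma indep_full_rank:
  assumes "graph_matroid_family M" "graph G" "M G G"
  shows "rank M G = card G"
proof -
  have m: "matroid G (M G)" using gm_mat assms by blast
  have f: "finite G" using assms graph_def by blast
  show ?thesis unfolding rank_rk using rk_ge[OF m assms(3)] rk_le_card[OF m f] by fastforce
qed

lemma full_rank_indep:
  assumes "graph_matroid_family M" "graph G" "rank M G = card G"
  shows "M G G"
proof -
  have m: "matroid G (M G)" using gm_mat assms by blast
  have f: "finite G" using assms graph_def by blast
  obtain X where "X \<subseteq> G" "M G X" "card X = rank M G" using rk_ex[OF m] unfolding rank_rk by blast
  then show ?thesis using assms f by (metis card_subset_eq)
qed

lemma exists_circuit:
  assumes gm: "graph_matroid_family M" and nt: "nontrivial M"
  shows "\<exists>C. circuit M C"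
proof -
  obtain G where G: "graph G" "rank M G < card G" using nt nontrivial_def by blast
  have m: "matroid G (M G)" using gm_mat gm G by blast
  have fG: "finite G" using G graph_def by blast
  have nG: "\<not> M G G" using indep_full_rank[OF gm G(1)] G by auto
  define P where "P = (\<lambda>C. C \<subseteq> G \<and> \<not> M G C)"
  have pG: "P G" using nG unfolding P_def by simp
  obtain C where C0: "P C" and Cm: "\<forall>y. P y \<longrightarrow> card C \<le> card y"
    using ex_has_least_nat[of P G card, OF pG] by auto
  have C: "C \<subseteq> G" "\<not> M G C" using C0 unfolding P_def by auto
  have gC: "graph C" using graph_sub G C by blast
  have fC: "finite C" using finite_subset C fG by blast
  have resC: "\<And>X. M C X \<longleftrightarrow> X \<subseteq> C \<and> M G X" using gm_res[OF gm G(1) gC C(1)] by simp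

  have r1: "rank M C < card C"
  proof -
    have "rank M C \<le> card C" unfolding rank_rk using rk_le_card[OF gm_mat[OF gm gC] fC] .
    moreover have "rank M C \<noteq> card C" using full_rank_indep[OF gm gC] resC C by auto
    ultimately show ?thesis by simp
  qed
  have r2: "rank M (C - {e}) = card C - 1" if e: "e \<in> C" for e
  proof -
    have g2: "graph (C - {e})" using graph_sub gC by blast
    have "M G (C - {e})"
    proof (rule ccontr)
      assume "\<not> M G (C - {e})"
      then have "P (C - {e})" using C unfolding P_def by auto
      then have "card C \<le> card (C - {e})" using Cm by simp
      moreover have "card (C - {e}) < card C" using e fC by (meson card_Diff1_less)
      ultimately show False by simp
    qed
    then have "M (C - {e}) (C - {e})" using gm_res[OF gm G(1) g2] C by auto
    then show ?thesis using indep_full_rank[OF gm g2] e fC by simp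
  qed
  have "circuit M C" unfolding circuit_def using gC r1 r2 by simp
  then show ?thesis by (rule exI)
qed

lemma circuit_nonempty: "circuit M C \<Longrightarrow> C \<noteq> {}"
  unfolding circuit_def by auto

lemma degree_pos:
  assumes g: "graph C" and v: "v \<in> verts C"
  shows "degree C v \<ge> 1"
proof -
  obtain e' where e': "e' \<in> C" "v \<in> e'" using v unfolding verts_def by auto
  have fC: "finite C" using g unfolding graph_def by simp
  have "e' \<in> {e \<in> C. v \<in> e}" using e' by simp
  then have "{e \<in> C. v \<in> e} \<noteq> {}" by auto
  moreover have "finite {e \<in> C. v \<in> e}" using fC by simp
  ultimately show ?thesis unfolding degree_def by (simp add: Suc_leI card_gt_0_iff)
qed

lemma min_degree_pos:
  assumes "circuit M C"
  shows "min_degree C \<ge> 1"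
proof -
  have g: "graph C" using assms unfolding circuit_def by simp
  obtain e where e: "e \<in> C" using circuit_nonempty[OF assms] by auto
  then have "card e = 2" using g unfolding graph_def by simp
  then obtain x y where xy: "e = {x,y}" by (auto simp: card_2_iff)
  have fv: "finite (verts C)" using finite_verts[OF g] .
  have "x \<in> verts C" using e xy unfolding verts_def by auto
  then have ne: "verts C \<noteq> {}" by auto
  have "Min (degree C ` verts C) \<in> degree C ` verts C" using fv ne by (intro Min_in) auto
  then obtain v where "v \<in> verts C" "min_degree C = degree C v" unfolding min_degree_def by auto
  then show ?thesis using degree_pos[OF g] by simp
qed

lemma threshold_circuit:
  assumes gm: "graph_matroid_family M" and nt: "nontrivial M"
  shows "\<exists>C. circuit M C \<and> card (verts C) - 1 = threshold M"
proof -
  obtain C1 where C1: "circuit M C1" using exists_circuit[OF gm nt] by auto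
  have "min_degree C1 - 1 \<in> {min_degree C - 1 | C. circuit M C}" using C1 by auto
  then have "{min_degree C - 1 | C. circuit M C} \<noteq> {}" by auto
  then have "dimensionality M \<in> {min_degree C - 1 | C. circuit M C}"
    unfolding dimensionality_def by (rule Inf_nat_def1)
  then obtain C0 where C0: "circuit M C0" "min_degree C0 - 1 = dimensionality M" by auto
  then have "min_degree C0 = dimensionality M + 1" using min_degree_pos[OF C0(1)] by simp
  then have "card (verts C0) - 1 \<in> {card (verts C) - 1 | C. circuit M C \<and> min_degree C = dimensionality M + 1}"
    using C0 by auto
  then have "{card (verts C) - 1 | C. circuit M C \<and> min_degree C = dimensionality M + 1} \<noteq> {}"
    by auto
  then have "threshold M \<in> {card (verts C) - 1 | C. circuit M C \<and> min_degree C = dimensionality M + 1}"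
    unfolding threshold_def by (rule Inf_nat_def1)
  then show ?thesis by auto
qed



lemma pair_case:
  assumes "p \<in> insert u (insert w W)" "q \<in> insert u (insert w W)" "p \<noteq> q" "{p,q} \<noteq> {u,w}"
    "W \<subseteq> V1 \<inter> V2" "u \<in> V1" "w \<in> V2"
  shows "{p,q} \<in> complete_graph V1 \<union> complete_graph V2"
proof (cases "p \<noteq> w \<and> q \<noteq> w")
  case True
  then have "p \<in> V1" "q \<in> V1" using assms by auto
  then show ?thesis using in_complete[of p V1 q] assms(3) by simp
next
  case False
  show ?thesis
  proof (cases "p = w")
    case True
    then have "q \<noteq> u" using assms(4) by auto
    then have "q \<in> V2" using assms True by auto
    then show ?thesis using in_complete[of p V2 q] assms(3,7) True by simp
  next
    case False2: False
    then have "q = w" using False by simp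
    then have "p \<noteq> u" using assms(4) by auto
    then have "p \<in> V2" using assms False2 by auto
    then show ?thesis using in_complete[of p V2 q] assms(3,7) \<open>q = w\<close> by simp
  qed
qed

lemma cross:
  assumes gm: "graph_matroid_family M" and C: "circuit M C" and t: "card (verts C) - 1 = t"
    and fV1: "finite V1" and fV2: "finite V2" and ct: "t \<le> card (V1 \<inter> V2)"
    and u: "u \<in> V1" "u \<notin> V2" and w: "w \<in> V2" "w \<notin> V1"
  shows "rk (M (complete_graph (V1 \<union> V2))) (insert {u,w} (complete_graph V1 \<union> complete_graph V2))
       = rk (M (complete_graph (V1 \<union> V2))) (complete_graph V1 \<union> complete_graph V2)"
proof -
  define K where "K = complete_graph (V1 \<union> V2)"
  have gK: "graph K" unfolding K_def using fV1 fV2 by (intro complete_graph_graph) simp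
  have mK: "matroid K (M K)" by (rule gm_mat[OF gm gK])
  have gC: "graph C" using C unfolding circuit_def by simp
  have fC: "finite C" using gC unfolding graph_def by simp
  obtain e0 where e0: "e0 \<in> C" using circuit_nonempty[OF C] by auto
  have "card e0 = 2" using gC e0 unfolding graph_def by simp
  then obtain x y where xy: "e0 = {x,y}" "x \<noteq> y" by (auto simp: card_2_iff)
  have xV: "x \<in> verts C" "y \<in> verts C" using e0 xy unfolding verts_def by auto
  have fvC: "finite (verts C)" by (rule finite_verts[OF gC])
  define R where "R = verts C - {x,y}"
  have fR: "finite R" using fvC unfolding R_def by simp
  have xR: "x \<notin> R" "y \<notin> R" unfolding R_def by auto
  have vC: "verts C = insert x (insert y R)" using xV unfolding R_def by auto
  have cvC: "card (verts C) = Suc (Suc (card R))" using vC fR xy(2) xR by simp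
  then have cR: "card R \<le> card (V1 \<inter> V2)" using t ct by simp
  obtain W where W: "W \<subseteq> V1 \<inter> V2" "card W = card R" "finite W"
    by (rule obtain_subset_with_card_n[OF cR])
  obtain g where g: "bij_betw g R W" using finite_same_card_bij[OF fR W(3)] W(2) by auto
  define f where "f = g(x := u, y := w)"
  have fR_eq: "\<And>z. z \<in> R \<Longrightarrow> f z = g z" unfolding f_def using xR by auto
  have bR: "bij_betw f R W" using g bij_betw_cong[of R f g W] fR_eq by simp
  have fx: "f x = u" "f y = w" unfolding f_def using xy(2) by auto
  define V' where "V' = insert u (insert w W)"
  have uW: "u \<notin> W" "w \<notin> W" using W(1) u w by auto
  have uw: "u \<noteq> w" using u w by auto
  have bij: "bij_betw f (verts C) V'"
  proof -
    have i1: "inj_on f R" "f ` R = W" using bR unfolding bij_betw_def by auto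
    have "inj_on f (insert y R)" using i1 fx uW xR by (simp add: inj_on_insert)
    moreover have "f x \<notin> f ` (insert y R - {x})" using i1 fx uW xR uw by auto
    ultimately have "inj_on f (insert x (insert y R))" by (simp add: inj_on_insert)
    moreover have "f ` (insert x (insert y R)) = V'" using i1 fx unfolding V'_def by simp
    ultimately show ?thesis unfolding bij_betw_def vC by simp
  qed
  have inj: "inj_on f (verts C)" using bij unfolding bij_betw_def by simp
  have eC: "\<And>e. e \<in> C \<Longrightarrow> e \<subseteq> verts C" unfolding verts_def by auto
  define H where "H = (\<lambda>e. f ` e) ` C"
  have injE: "inj_on (\<lambda>e. f ` e) C"
  proof (rule inj_onI)
    fix a b assume ab: "a \<in> C" "b \<in> C" "f ` a = f ` b"
    show "a = b" using inj_on_image_eq_iff[OF inj eC[OF ab(1)] eC[OF ab(2)]] ab(3) by simp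
  qed
  have gH: "graph H" unfolding graph_def
  proof
    show "finite H" unfolding H_def using fC by simp
    show "\<forall>e\<in>H. card e = 2"
    proof
      fix e' assume "e' \<in> H"
      then obtain e where e: "e \<in> C" "e' = f ` e" unfolding H_def by auto
      have "card (f ` e) = card e" by (rule card_image[OF inj_on_subset[OF inj eC[OF e(1)]]])
      then show "card e' = 2" using e gC unfolding graph_def by simp
    qed
  qed
  have vH: "verts H = V'"
  proof -
    have "verts H = f ` (verts C)" unfolding verts_def H_def by auto
    then show ?thesis using bij unfolding bij_betw_def by simp
  qed
  have isoc: "\<forall>a\<in>verts C. \<forall>b\<in>verts C. {a,b} \<in> C \<longleftrightarrow> {f a, f b} \<in> H"
  proof (intro ballI iffI)
    fix a b assume a: "a \<in> verts C" and b: "b \<in> verts C"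
    {
      assume "{a,b} \<in> C"
      moreover have "{f a, f b} = f ` {a,b}" by simp
      ultimately show "{f a, f b} \<in> H" unfolding H_def by (metis image_eqI)
    }
    {
      assume "{f a, f b} \<in> H"
      then obtain e where e: "e \<in> C" "{f a, f b} = f ` e" unfolding H_def by auto
      have ab: "{a,b} \<subseteq> verts C" using a b by simp
      have "f ` {a,b} = f ` e" using e(2) by simp
      then have "{a,b} = e" using inj_on_image_eq_iff[OF inj ab eC[OF e(1)]] by simp
      then show "{a,b} \<in> C" using e(1) by simp
    }
  qed
  have bij': "bij_betw f (verts C) (verts H)" using bij vH by simp
  have iso: "\<And>X. X \<subseteq> C \<Longrightarrow> M C X \<longleftrightarrow> M H ((\<lambda>e. f ` e) ` X)"
    using gm_iso[OF gm gC gH bij' isoc] by simp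
  have nC: "\<not> M C C"
  proof
    assume "M C C"
    then have "rank M C = card C" by (rule indep_full_rank[OF gm gC])
    then show False using C unfolding circuit_def by simp
  qed
  have nH: "\<not> M H H" using iso[of C] nC unfolding H_def by simp
  have rC: "rank M (C - {e0}) = card C - 1" using C e0 unfolding circuit_def by simp
  have g2: "graph (C - {e0})" using graph_sub[OF gC] by simp
  have "card (C - {e0}) = card C - 1" using e0 fC by simp
  then have "M (C - {e0}) (C - {e0})" using full_rank_indep[OF gm g2] rC by simp
  then have "M C (C - {e0})" using gm_res[OF gm gC g2] by auto
  then have m1: "M H ((\<lambda>e. f ` e) ` (C - {e0}))" using iso[of "C - {e0}"] by auto
  have fe0: "f ` e0 = {u,w}" using xy fx by simp
  have "(\<lambda>e. f ` e) ` (C - {e0}) = (\<lambda>e. f ` e) ` C - (\<lambda>e. f ` e) ` {e0}"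
    by (rule inj_on_image_set_diff[OF injE]) (use e0 in auto)
  then have imgdiff: "(\<lambda>e. f ` e) ` (C - {e0}) = H - {{u,w}}" using fe0 unfolding H_def by simp
  have uwH: "{u,w} \<in> H" unfolding H_def using e0 fe0 by (metis image_eqI)
  have HV: "H \<subseteq> complete_graph V'" using graph_sub_complete[OF gH] vH by simp
  have V'sub: "V' \<subseteq> V1 \<union> V2" using W u w unfolding V'_def by auto
  have HK: "H \<subseteq> K" using HV complete_graph_mono[OF V'sub] unfolding K_def by simp
  have MHd: "M H (H - {{u,w}})" using m1 imgdiff by simp
  have MKH: "M K (H - {{u,w}})" using gm_res[OF gm gK gH HK] MHd by simp
  have nKH: "\<not> M K H" using gm_res[OF gm gK gH HK] nH by simp
  have sub: "H - {{u,w}} \<subseteq> complete_graph V1 \<union> complete_graph V2"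
  proof
    fix e assume e: "e \<in> H - {{u,w}}"
    then have eH: "e \<in> complete_graph V'" and ne: "e \<noteq> {u,w}" using HV by auto
    then obtain p q where pq: "p \<in> V'" "q \<in> V'" "p \<noteq> q" "e = {p,q}"
      unfolding complete_graph_def by auto
    show "e \<in> complete_graph V1 \<union> complete_graph V2"
      using pair_case[of p u w W q V1 V2] pq ne W(1) u(1) w(1) unfolding V'_def by simp
  qed
  have ins: "insert {u,w} (H - {{u,w}}) = H" using uwH by auto
  have "\<not> M K (insert {u,w} (H - {{u,w}}))" using nKH ins by simp
  from rk_CL[OF mK MKH sub this] show ?thesis unfolding K_def .
qed



theorem lemma2p3:
  fixes M :: "'v graph \<Rightarrow> 'v set set \<Rightarrow> bool" and G1 G2 :: "'v graph"
  assumes "infinite (UNIV :: 'v set)"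
    and "graph_matroid_family M"
    and "nontrivial M"
    and "graph G1" and "graph G2"
    and "card (verts G1 \<inter> verts G2) \<ge> threshold M"
    and "rigid M G1" and "rigid M G2"
  shows "rigid M (G1 \<union> G2)"
proof -
  note gm = assms(2)
  define V1 where "V1 = verts G1"
  define V2 where "V2 = verts G2"
  define K where "K = complete_graph (V1 \<union> V2)"
  define K1 where "K1 = complete_graph V1"
  define K2 where "K2 = complete_graph V2"
  define G where "G = G1 \<union> G2"
  have fV1: "finite V1" unfolding V1_def by (rule finite_verts[OF assms(4)])
  have fV2: "finite V2" unfolding V2_def by (rule finite_verts[OF assms(5)])
  have gK: "graph K" unfolding K_def using fV1 fV2 by (intro complete_graph_graph) simp
  have gK1: "graph K1" unfolding K1_def using fV1 by (rule complete_graph_graph)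
  have gK2: "graph K2" unfolding K2_def using fV2 by (rule complete_graph_graph)
  have mK: "matroid K (M K)" by (rule gm_mat[OF gm gK])
  have gG: "graph G" unfolding G_def by (rule graph_Un[OF assms(4,5)])
  have vG: "verts G = V1 \<union> V2" unfolding G_def V1_def V2_def by (rule verts_Un)
  have K1K: "K1 \<subseteq> K" unfolding K1_def K_def by (rule complete_graph_mono) simp
  have K2K: "K2 \<subseteq> K" unfolding K2_def K_def by (rule complete_graph_mono) simp
  have G1K1: "G1 \<subseteq> K1" unfolding K1_def V1_def by (rule graph_sub_complete[OF assms(4)])
  have G2K2: "G2 \<subseteq> K2" unfolding K2_def V2_def by (rule graph_sub_complete[OF assms(5)])
  have GK: "G \<subseteq> K" using G1K1 G2K2 K1K K2K unfolding G_def by auto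
  let ?r = "rk (M K)"
  have r1: "?r G1 = ?r K1"
  proof -
    have "rank M G1 = rank M K1" using assms(7) unfolding rigid_def K1_def V1_def .
    moreover have "rank M G1 = ?r G1" by (rule rank_res[OF gm gK assms(4)]) (use G1K1 K1K in auto)
    moreover have "rank M K1 = ?r K1" by (rule rank_res[OF gm gK gK1 K1K])
    ultimately show ?thesis by simp
  qed
  have r2: "?r G2 = ?r K2"
  proof -
    have "rank M G2 = rank M K2" using assms(8) unfolding rigid_def K2_def V2_def .
    moreover have "rank M G2 = ?r G2" by (rule rank_res[OF gm gK assms(5)]) (use G2K2 K2K in auto)
    moreover have "rank M K2 = ?r K2" by (rule rank_res[OF gm gK gK2 K2K])
    ultimately show ?thesis by simp
  qed
  have e1: "\<forall>e\<in>K1. ?r (insert e G) = ?r G"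
  proof
    fix e assume e: "e \<in> K1"
    have "?r G1 \<le> ?r (insert e G1)" by (rule rk_mono[OF mK]) auto
    moreover have "?r (insert e G1) \<le> ?r K1" by (rule rk_mono[OF mK]) (use e G1K1 in auto)
    ultimately have "?r (insert e G1) = ?r G1" using r1 by simp
    then show "?r (insert e G) = ?r G" by (rule rk_mono_cl[OF mK, rotated]) (simp add: G_def)
  qed
  have s1: "?r (G \<union> K1) = ?r G" by (rule rk_union[OF mK e1])
  have e2: "\<forall>e\<in>K2. ?r (insert e (G \<union> K1)) = ?r (G \<union> K1)"
  proof
    fix e assume e: "e \<in> K2"
    have "?r G2 \<le> ?r (insert e G2)" by (rule rk_mono[OF mK]) auto
    moreover have "?r (insert e G2) \<le> ?r K2" by (rule rk_mono[OF mK]) (use e G2K2 in auto)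
    ultimately have "?r (insert e G2) = ?r G2" using r2 by simp
    then show "?r (insert e (G \<union> K1)) = ?r (G \<union> K1)" by (rule rk_mono_cl[OF mK, rotated]) (auto simp: G_def)
  qed
  have s2: "?r (G \<union> K1 \<union> K2) = ?r G" using rk_union[OF mK e2] s1 by simp
  obtain C where C: "circuit M C" "card (verts C) - 1 = threshold M"
    using threshold_circuit[OF gm assms(3)] by auto
  have ct: "threshold M \<le> card (V1 \<inter> V2)" using assms(6) unfolding V1_def V2_def .
  have e3: "\<forall>e\<in>K. ?r (insert e (G \<union> K1 \<union> K2)) = ?r (G \<union> K1 \<union> K2)"
  proof
    fix e assume e: "e \<in> K"
    have "?r (insert e (K1 \<union> K2)) = ?r (K1 \<union> K2)"
    proof (cases "e \<in> K1 \<union> K2")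
      case True
      then show ?thesis by (simp add: insert_absorb)
    next
      case False
      obtain a b where ab: "a \<in> V1 \<union> V2" "b \<in> V1 \<union> V2" "a \<noteq> b" "e = {a,b}"
        using e unfolding K_def complete_graph_def by auto
      have n1: "\<not> (a \<in> V1 \<and> b \<in> V1)" using False ab in_complete[of a V1 b] unfolding K1_def by auto
      have n2: "\<not> (a \<in> V2 \<and> b \<in> V2)" using False ab in_complete[of a V2 b] unfolding K2_def by auto
      show ?thesis
      proof (cases "a \<in> V1")
        case True
        then have "a \<notin> V2" "b \<in> V2" "b \<notin> V1" using n1 n2 ab by auto
        then show ?thesis using cross[OF gm C(1) C(2) fV1 fV2 ct, of a b] True ab(4)
          unfolding K_def K1_def K2_def by simp
      next
        case False
        then have "a \<in> V2" "b \<in> V1" "b \<notin> V2" using n1 n2 ab by auto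
        moreover have "e = {b,a}" using ab(4) by auto
        ultimately show ?thesis using cross[OF gm C(1) C(2) fV1 fV2 ct, of b a] False
          unfolding K_def K1_def K2_def by simp
      qed
    qed
    then show "?r (insert e (G \<union> K1 \<union> K2)) = ?r (G \<union> K1 \<union> K2)"
      by (rule rk_mono_cl[OF mK, rotated]) auto
  qed
  have s3: "?r (G \<union> K1 \<union> K2 \<union> K) = ?r G" using rk_union[OF mK e3] s2 by simp
  moreover have "G \<union> K1 \<union> K2 \<union> K = K" using GK K1K K2K by auto
  ultimately have fin: "?r K = ?r G" by simp
  have "rank M G = ?r G" by (rule rank_res[OF gm gK gG GK])
  moreover have "rank M K = ?r K" by (rule rank_res[OF gm gK gK]) simp
  ultimately have "rank M G = rank M (complete_graph (verts G))" using fin vG unfolding K_def by simp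
  then show ?thesis unfolding rigid_def G_def .
qed

end
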